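(* For every set of formulas $\Gamma$ and formula $\varphi$: (1) $\Gamma\vdash_{\mathsf{NeL}+\{\mathrm{(DI)}^s\}}\varphi$ iff $\Gamma\models_{\mathfrak{N}_w^{d}}\varphi$; (2) $\Gamma\vdash_{\mathsf{NeL}^{\mathrm{as}}+\{\mathrm{(DI)}^s\}}\varphi$ iff $\Gamma\models_{\mathfrak{N}^{d}}\varphi$; (3) $\varphi$ is a theorem of $\mathsf{NL}+\{\mathrm{(DI)}\}$ iff $\models_{\mathfrak{N}_w^{d}}\varphi$; (4) $\varphi$ is a theorem of $\mathsf{NL}^{\mathrm{as}}+\{\mathrm{(DI)}\}$ iff $\models_{\mathfrak{N}^{d}}\varphi$.
   Context: Formulas are built from a countably infinite set of variables using binary $\otimes,\circ$ and unary ${}^{*}$; $\mathbf{Fm}$ is the formula algebra. Abbreviations (also term operations): $\varphi\Rightarrow\psi:=(\varphi\circ\psi^{*})^{*}$; $\varphi\Leftrightarrow\psi:=(\varphi\Rightarrow\psi)\otimes(\psi\Rightarrow\varphi)$; $\varphi\not\Leftrightarrow\psi:=(\varphi\Leftrightarrow\psi)^{*}$; $\varphi\not\Leftrightarrow\psi\not\Leftrightarrow\chi:=((\varphi\not\Leftrightarrow\psi)\otimes(\varphi\not\Leftrightarrow\chi))\otimes(\psi\not\Leftrightarrow\chi)$; $\varphi\oplus\psi:=(\varphi^{*}\otimes\psi^{*})^{*}$. Axiom schemes: (A1) $\varphi\Rightarrow\varphi$; (A2) $(\varphi\circ\psi)\Rightarrow(\psi\circ\varphi)$; (A3) $\varphi\Rightarrow\varphi^{**}$;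 (A4) $(\varphi\Rightarrow\psi)\Rightarrow(\varphi\circ\psi)$; (A5) $(\varphi\otimes\psi)\Leftrightarrow(\psi\otimes\varphi)$; (A6) $((\varphi\otimes\psi)\Rightarrow\chi)\Rightarrow((\varphi\otimes\chi^{*})\Rightarrow\psi^{*})$; (A7) $(\varphi\not\Leftrightarrow\psi\not\Leftrightarrow\chi)\Rightarrow((\varphi\Rightarrow\psi)\Rightarrow((\psi\Rightarrow\chi)\Rightarrow(\varphi\Rightarrow\chi)))$. $\mathsf{NL}$ has these axioms and rules applicable only to theorems: from theorems $\varphi\Rightarrow\psi$, $\varphi$ infer $\psi$; from theorems $\varphi,\psi$ infer $\varphi\otimes\psi$; from theorems $\varphi\Leftrightarrow\psi$ and $\chi$ infer $\chi'$ ($\chi'$ from $\chi$ replacing one or more occurrences of $\varphi$ by $\psi$); from a theorem $\varphi\otimes\psi$ infer $\varphi$. $\mathsf{NeL}$ has the same axioms and the same rules applicable to arbitrary formulas, with $\Gamma\vdash_{\mathsf{NeL}}\varphi$ meaning derivability from $\Gamma$. The superscript "as" means adding axiom schemes $(\varphi\otimes\psi)\otimes\chi\Rightarrow\varphi\otimes(\psi\otimes\chi)$ and $\varphi\otimes(\psi\otimes\chi)\Rightarrow(\varphi\otimes\psi)\otimes\chi$. (DI): from a theorem $\varphi$ infer $\varphi\oplus\psi$; $\mathrm{(DI)}^s$: the rule $\varphi/\varphi\oplus\psi$ for arbitrary formulas. A weak $\mathcal{N}$-algebra is an algebra $(A,\otimes,\circ,{}^{*})$ of type $(2,2,1)$ with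 $\otimes,\circ$ commutative, $x^{**}=x$, $(x\otimes y)\circ z=(x\otimes z)\circ y$; an $\mathcal{N}$-algebra has in addition $\otimes$ associative. With $\mathsf{t}\ne\mathsf{f}$ symbols not in $A$, $\overline A=A\cup\{\mathsf{t},\mathsf{f}\}$, an $\mathfrak{N}_w$-model is $(\mathbf A,\perp,\{\mathsf{t},\mathsf{f}\})$, $\mathbf A$ a weak $\mathcal{N}$-algebra, $\perp\subseteq\overline A\times\overline A$, such that for all $x,y,z\in A$: (a) $x\perp x^{*}$; (b) $x\perp y^{*}$ and $y\perp x^{*}$ imply $x=y$; (c) $x\perp y$ iff $x\circ y\perp\mathsf{t}$; (d) $x\perp\mathsf{t}$ iff $x^{*}\perp\mathsf{f}$; (e) $x\perp\mathsf{f}$ and $y\perp\mathsf{f}$ iff $x\otimes y\perp\mathsf{f}$; (f) $(x\circ y^{*})^{*}\perp(x\circ y)^{*}$; (g) $x\perp y$ and $x\perp\mathsf{f}$ imply $y\perp\mathsf{t}$; (h) $(x\not\Leftrightarrow y\not\Leftrightarrow z)\perp((x\Rightarrow y)\Rightarrow((y\Rightarrow z)\Rightarrow(x\Rightarrow z)))^{*}$. $\mathfrak{N}_w^{d}$ ($\mathfrak{N}^{d}$) is the class of $\mathfrak{N}_w$-models (with $\mathbf A$ an $\mathcal{N}$-algebra) satisfying: for all $x,y\in A$, $x\perp\mathsf{f}$ implies $x\oplus y\perp\mathsf{f}$. $F_\perp=\{a\in A:a\perp\mathsf{f}\}$. For a class $K$: $\Gamma\models_K\varphi$ iff there is a finite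 $\Gamma'\subseteq\Gamma$ such that for all models in $K$ and homomorphisms $h:\mathbf{Fm}\to\mathbf A$, $h(\Gamma')\subseteq F_\perp$ implies $h(\varphi)\in F_\perp$; $\models_K\varphi$ iff $h(\varphi)\perp\mathsf{f}$ for all models in $K$ and all $h$. *)

theory Defs
  imports Main
begin

text \<open>Formulas over countably many variables (indexed by nat), with binary
  otimes (Ot), circ (Ci) and unary star (St).\<close>

datatype fm = Var nat | Ot fm fm | Ci fm fm | St fm

definition fimp :: "fm \<Rightarrow> fm \<Rightarrow> fm" where
  "fimp a b = St (Ci a (St b))"
definition fiff :: "fm \<Rightarrow> fm \<Rightarrow> fm" where
  "fiff a b = Ot (fimp a b) (fimp b a)"
definition fniff :: "fm \<Rightarrow> fm \<Rightarrow> fm" where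
  "fniff a b = St (fiff a b)"
definition fniff3 :: "fm \<Rightarrow> fm \<Rightarrow> fm \<Rightarrow> fm" where
  "fniff3 a b c = Ot (Ot (fniff a b) (fniff a c)) (fniff b c)"
definition foplus :: "fm \<Rightarrow> fm \<Rightarrow> fm" where
  "foplus a b = St (Ot (St a) (St b))"

inductive Ax :: "fm \<Rightarrow> bool" where
  A1: "Ax (fimp p p)"
| A2: "Ax (fimp (Ci p q) (Ci q p))"
| A3: "Ax (fimp p (St (St p)))"
| A4: "Ax (fimp (fimp p q) (Ci p q))"
| A5: "Ax (fiff (Ot p q) (Ot q p))"
| A6: "Ax (fimp (fimp (Ot p q) r) (fimp (Ot p (St r)) (St q)))"
| A7: "Ax (fimp (fniff3 p q r) (fimp (fimp p q) (fimp (fimp q r) (fimp p r))))"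

inductive AsAx :: "fm \<Rightarrow> bool" where
  as1: "AsAx (fimp (Ot (Ot p q) r) (Ot p (Ot q r)))"
| as2: "AsAx (fimp (Ot p (Ot q r)) (Ot (Ot p q) r))"

text \<open>repl p q b c c': c' arises from c by replacing some occurrences of p by q;
  the flag b is True iff at least one occurrence was replaced.\<close>

inductive repl :: "fm \<Rightarrow> fm \<Rightarrow> bool \<Rightarrow> fm \<Rightarrow> fm \<Rightarrow> bool" for p q where
  keep: "repl p q False c c"
| here: "repl p q True p q"
| ot: "repl p q b1 a a' \<Longrightarrow> repl p q b2 c c' \<Longrightarrow> repl p q (b1 \<or> b2) (Ot a c) (Ot a' c')"
| ci: "repl p q b1 a a' \<Longrightarrow> repl p q b2 c c' \<Longrightarrow> repl p q (b1 \<or> b2) (Ci a c) (Ci a' c')"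
| st: "repl p q b a a' \<Longrightarrow> repl p q b (St a) (St a')"

text \<open>NeL_DI as Gamma phi: phi is derivable from Gamma in NeL + (DI)^s
  (NeL^as + (DI)^s when as = True); all rules apply to arbitrary formulas.\<close>

inductive NeL_DI :: "bool \<Rightarrow> fm set \<Rightarrow> fm \<Rightarrow> bool" for as :: bool and \<Gamma> :: "fm set" where
  hyp: "p \<in> \<Gamma> \<Longrightarrow> NeL_DI as \<Gamma> p"
| ax: "Ax p \<Longrightarrow> NeL_DI as \<Gamma> p"
| axas: "as \<Longrightarrow> AsAx p \<Longrightarrow> NeL_DI as \<Gamma> p"
| mp: "NeL_DI as \<Gamma> (fimp p q) \<Longrightarrow> NeL_DI as \<Gamma> p \<Longrightarrow> NeL_DI as \<Gamma> q"
| adj: "NeL_DI as \<Gamma> p \<Longrightarrow> NeL_DI as \<Gamma> q \<Longrightarrow> NeL_DI as \<Gamma> (Ot p q)"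
| rep: "NeL_DI as \<Gamma> (fiff p q) \<Longrightarrow> NeL_DI as \<Gamma> c \<Longrightarrow> repl p q True c c'
        \<Longrightarrow> NeL_DI as \<Gamma> c'"
| simpl: "NeL_DI as \<Gamma> (Ot p q) \<Longrightarrow> NeL_DI as \<Gamma> p"
| DIs: "NeL_DI as \<Gamma> p \<Longrightarrow> NeL_DI as \<Gamma> (foplus p q)"

text \<open>Theorems of NL + (DI) (NL^as + (DI) when as = True): the rules are applied
  only to theorems, i.e. derivations with no hypotheses.\<close>

inductive NL_DI_thm :: "bool \<Rightarrow> fm \<Rightarrow> bool" for as :: bool where
  ax: "Ax p \<Longrightarrow> NL_DI_thm as p"
| axas: "as \<Longrightarrow> AsAx p \<Longrightarrow> NL_DI_thm as p"
| mp: "NL_DI_thm as (fimp p q) \<Longrightarrow> NL_DI_thm as p \<Longrightarrow> NL_DI_thm as q"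
| adj: "NL_DI_thm as p \<Longrightarrow> NL_DI_thm as q \<Longrightarrow> NL_DI_thm as (Ot p q)"
| rep: "NL_DI_thm as (fiff p q) \<Longrightarrow> NL_DI_thm as c \<Longrightarrow> repl p q True c c'
        \<Longrightarrow> NL_DI_thm as c'"
| simpl: "NL_DI_thm as (Ot p q) \<Longrightarrow> NL_DI_thm as p"
| DI: "NL_DI_thm as p \<Longrightarrow> NL_DI_thm as (foplus p q)"

text \<open>Extended carrier: A together with two fresh symbols t (TT) and f (FF).\<close>
datatype 'a ext = El 'a | TT | FF

record 'a nmodel =
  car :: "'a set"
  otm :: "'a \<Rightarrow> 'a \<Rightarrow> 'a"
  cim :: "'a \<Rightarrow> 'a \<Rightarrow> 'a"
  stm :: "'a \<Rightarrow> 'a"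
  perp :: "'a ext \<Rightarrow> 'a ext \<Rightarrow> bool"

definition mimp :: "'a nmodel \<Rightarrow> 'a \<Rightarrow> 'a \<Rightarrow> 'a" where
  "mimp M x y = stm M (cim M x (stm M y))"
definition miff :: "'a nmodel \<Rightarrow> 'a \<Rightarrow> 'a \<Rightarrow> 'a" where
  "miff M x y = otm M (mimp M x y) (mimp M y x)"
definition mniff :: "'a nmodel \<Rightarrow> 'a \<Rightarrow> 'a \<Rightarrow> 'a" where
  "mniff M x y = stm M (miff M x y)"
definition mniff3 :: "'a nmodel \<Rightarrow> 'a \<Rightarrow> 'a \<Rightarrow> 'a \<Rightarrow> 'a" where
  "mniff3 M x y z = otm M (otm M (mniff M x y) (mniff M x z)) (mniff M y z)"
definition moplus :: "'a nmodel \<Rightarrow> 'a \<Rightarrow> 'a \<Rightarrow> 'a" where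
  "moplus M x y = stm M (otm M (stm M x) (stm M y))"

definition weak_N_alg :: "'a nmodel \<Rightarrow> bool" where
  "weak_N_alg M \<longleftrightarrow>
     (\<forall>x\<in>car M. \<forall>y\<in>car M. otm M x y \<in> car M \<and> cim M x y \<in> car M) \<and>
     (\<forall>x\<in>car M. stm M x \<in> car M) \<and>
     (\<forall>x\<in>car M. \<forall>y\<in>car M. otm M x y = otm M y x \<and> cim M x y = cim M y x) \<and>
     (\<forall>x\<in>car M. stm M (stm M x) = x) \<and>
     (\<forall>x\<in>car M. \<forall>y\<in>car M. \<forall>z\<in>car M. cim M (otm M x y) z = cim M (otm M x z) y)"

definition N_alg :: "'a nmodel \<Rightarrow> bool" where
  "N_alg M \<longleftrightarrow> weak_N_alg M \<and>
     (\<forall>x\<in>car M. \<forall>y\<in>car M. \<forall>z\<in>car M. otm M (otm M x y) z = otm M x (otm M y z))"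

definition Nw_model :: "'a nmodel \<Rightarrow> bool" where
  "Nw_model M \<longleftrightarrow> weak_N_alg M \<and>
   (\<forall>x\<in>car M. \<forall>y\<in>car M. \<forall>z\<in>car M.
      perp M (El x) (El (stm M x)) \<and>
      (perp M (El x) (El (stm M y)) \<and> perp M (El y) (El (stm M x)) \<longrightarrow> x = y) \<and>
      (perp M (El x) (El y) \<longleftrightarrow> perp M (El (cim M x y)) TT) \<and>
      (perp M (El x) TT \<longleftrightarrow> perp M (El (stm M x)) FF) \<and>
      (perp M (El x) FF \<and> perp M (El y) FF \<longleftrightarrow> perp M (El (otm M x y)) FF) \<and>
      perp M (El (stm M (cim M x (stm M y)))) (El (stm M (cim M x y))) \<and>
      (perp M (El x) (El y) \<and> perp M (El x) FF \<longrightarrow> perp M (El y) TT) \<and>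
      perp M (El (mniff3 M x y z))
             (El (stm M (mimp M (mimp M x y) (mimp M (mimp M y z) (mimp M x z))))))"

definition Nwd :: "'a nmodel \<Rightarrow> bool" where
  "Nwd M \<longleftrightarrow> Nw_model M \<and>
     (\<forall>x\<in>car M. \<forall>y\<in>car M. perp M (El x) FF \<longrightarrow> perp M (El (moplus M x y)) FF)"

definition Nd :: "'a nmodel \<Rightarrow> bool" where
  "Nd M \<longleftrightarrow> Nwd M \<and> N_alg M"

definition Fperp :: "'a nmodel \<Rightarrow> 'a set" where
  "Fperp M = {a \<in> car M. perp M (El a) FF}"

definition is_hom :: "'a nmodel \<Rightarrow> (fm \<Rightarrow> 'a) \<Rightarrow> bool" where
  "is_hom M h \<longleftrightarrow> (\<forall>n. h (Var n) \<in> car M) \<and>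
     (\<forall>a b. h (Ot a b) = otm M (h a) (h b)) \<and>
     (\<forall>a b. h (Ci a b) = cim M (h a) (h b)) \<and>
     (\<forall>a. h (St a) = stm M (h a))"

definition conseq :: "('a nmodel \<Rightarrow> bool) \<Rightarrow> fm set \<Rightarrow> fm \<Rightarrow> bool" where
  "conseq K \<Gamma> p \<longleftrightarrow> (\<exists>\<Gamma>'. finite \<Gamma>' \<and> \<Gamma>' \<subseteq> \<Gamma> \<and>
     (\<forall>M h. K M \<longrightarrow> is_hom M h \<longrightarrow> h ` \<Gamma>' \<subseteq> Fperp M \<longrightarrow> h p \<in> Fperp M))"

definition valid :: "('a nmodel \<Rightarrow> bool) \<Rightarrow> fm \<Rightarrow> bool" where
  "valid K p \<longleftrightarrow> (\<forall>M h. K M \<longrightarrow> is_hom M h \<longrightarrow> perp M (El (h p)) FF)"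

end

theory Submission
  imports Defs "HOL-Library.Countable"
begin


lemma hom_car: "weak_N_alg M \<Longrightarrow> is_hom M h \<Longrightarrow> h p \<in> car M"
  by (induction p) (auto simp: weak_N_alg_def is_hom_def)

lemma hom_simps:
  assumes "is_hom M h"
  shows "h (Ot a b) = otm M (h a) (h b)" "h (Ci a b) = cim M (h a) (h b)" "h (St a) = stm M (h a)"
    "h (fimp a b) = mimp M (h a) (h b)" "h (fiff a b) = miff M (h a) (h b)"
    "h (fniff a b) = mniff M (h a) (h b)" "h (fniff3 a b c) = mniff3 M (h a) (h b) (h c)"
    "h (foplus a b) = moplus M (h a) (h b)"
  using assms by (auto simp: is_hom_def fimp_def mimp_def fiff_def miff_def fniff_def mniff_def
      fniff3_def mniff3_def foplus_def moplus_def)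

context
  fixes M :: "'a nmodel"
  assumes nw: "Nw_model M"
begin

lemma wk: "weak_N_alg M" using nw by (simp add: Nw_model_def)

lemma cl: "x \<in> car M \<Longrightarrow> y \<in> car M \<Longrightarrow> otm M x y \<in> car M"
  "x \<in> car M \<Longrightarrow> y \<in> car M \<Longrightarrow> cim M x y \<in> car M"
  "x \<in> car M \<Longrightarrow> stm M x \<in> car M"
  using wk by (auto simp: weak_N_alg_def)

lemma alg: "x \<in> car M \<Longrightarrow> y \<in> car M \<Longrightarrow> otm M x y = otm M y x"
  "x \<in> car M \<Longrightarrow> y \<in> car M \<Longrightarrow> cim M x y = cim M y x"
  "x \<in> car M \<Longrightarrow> stm M (stm M x) = x"
  "x \<in> car M \<Longrightarrow> y \<in> car M \<Longrightarrow> z \<in> car M \<Longrightarrow> cim M (otm M x y) z = cim M (otm M x z) y"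
  using wk by (auto simp: weak_N_alg_def)

lemma cond:
  assumes "x \<in> car M" "y \<in> car M" "z \<in> car M"
  shows "perp M (El x) (El (stm M x))"
   "perp M (El x) (El (stm M y)) \<Longrightarrow> perp M (El y) (El (stm M x)) \<Longrightarrow> x = y"
   "perp M (El x) (El y) \<longleftrightarrow> perp M (El (cim M x y)) TT"
   "perp M (El x) TT \<longleftrightarrow> perp M (El (stm M x)) FF"
   "perp M (El x) FF \<and> perp M (El y) FF \<longleftrightarrow> perp M (El (otm M x y)) FF"
   "perp M (El (stm M (cim M x (stm M y)))) (El (stm M (cim M x y)))"
   "perp M (El x) (El y) \<Longrightarrow> perp M (El x) FF \<Longrightarrow> perp M (El y) TT"
   "perp M (El (mniff3 M x y z))
             (El (stm M (mimp M (mimp M x y) (mimp M (mimp M y z) (mimp M x z)))))"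
  using nw assms unfolding Nw_model_def by blast+

lemma impF: "x \<in> car M \<Longrightarrow> y \<in> car M \<Longrightarrow>
   perp M (El (mimp M x y)) FF \<longleftrightarrow> perp M (El x) (El (stm M y))"
  unfolding mimp_def using cond(3,4) cl by metis

lemma iffF: "x \<in> car M \<Longrightarrow> y \<in> car M \<Longrightarrow> perp M (El (miff M x y)) FF \<Longrightarrow> x = y"
  unfolding miff_def using cond(5) cond(2) impF cl unfolding mimp_def by metis

end

lemma repl_hom: "repl p q b c c' \<Longrightarrow> is_hom M h \<Longrightarrow> h p = h q \<Longrightarrow> h c = h c'"
  by (induction rule: repl.induct) (auto simp: is_hom_def)

lemma ax_sound:
  assumes nw: "Nw_model M" and h: "is_hom M h" and ax: "Ax f"
  shows "perp M (El (h f)) FF"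
proof -
  have wk: "weak_N_alg M" using nw by (simp add: Nw_model_def)
  have c: "\<And>p. h p \<in> car M" using hom_car[OF wk h] .
  note hs = hom_simps[OF h]
  have mc: "\<And>x y. x \<in> car M \<Longrightarrow> y \<in> car M \<Longrightarrow> mimp M x y \<in> car M"
    using cl[OF nw] by (simp add: mimp_def)
  note cl = cl[OF nw] and alg = alg[OF nw] and cond = cond[OF nw c c c] and impF = impF[OF nw]
  show ?thesis using ax
  proof cases
    case (A1 p) then show ?thesis by (simp add: hs impF c cond(1))
  next
    case (A2 p q) then show ?thesis using cond(1)[of "Ci p q"]
      by (simp add: hs impF c cl alg)
  next
    case (A3 p) then show ?thesis using cond(1)[of p]
      by (simp add: hs impF c cl alg)
  next
    case (A4 p q) then show ?thesis using cond(6)[of p q]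
      by (simp add: hs impF c cl mc mimp_def[symmetric])
  next
    case (A5 p q)
    have "perp M (El (h (fimp (Ot p q) (Ot q p)))) FF" using cond(1)[of "Ot p q"]
      by (simp add: hs impF c cl alg)
    moreover have "perp M (El (h (fimp (Ot q p) (Ot p q)))) FF" using cond(1)[of "Ot q p"]
      by (simp add: hs impF c cl alg)
    ultimately show ?thesis using A5 cond(5)[of "fimp (Ot p q) (Ot q p)" "fimp (Ot q p) (Ot p q)"]
      by (simp add: hs miff_def)
  next
    case (A6 p q r)
    define x where "x = h p" define y where "y = h q" define z where "z = h r"
    have xyz: "x \<in> car M" "y \<in> car M" "z \<in> car M" using c by (auto simp: x_def y_def z_def)
    define w where "w = cim M (otm M x y) (stm M z)"
    have wc: "w \<in> car M" using xyz cl by (simp add: w_def)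
    have e1: "stm M (mimp M (otm M x (stm M z)) (stm M y)) = w"
      unfolding mimp_def w_def using xyz cl alg by metis
    have "perp M (El (stm M w)) (El (stm M (stm M w)))"
      using cond(1)[of "St (Ci (Ot p q) (St r))"] by (simp add: hs w_def x_def y_def z_def)
    then have "perp M (El (mimp M (otm M x y) z)) (El (stm M (mimp M (otm M x (stm M z)) (stm M y))))"
      using e1 wc alg by (simp add: mimp_def w_def)
    then show ?thesis using A6 xyz by (simp add: hs impF cl mc flip: x_def y_def z_def)
  next
    case (A7 p q r)
    let ?X = "fniff3 p q r" and ?Y = "fimp (fimp p q) (fimp (fimp q r) (fimp p r))"
    have "perp M (El (h ?X)) (El (stm M (h ?Y)))" using cond(8)[of p q r] by (simp only: hs)
    then have "perp M (El (mimp M (h ?X) (h ?Y))) FF" using impF[OF c c] by blast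
    then show ?thesis using A7 by (simp only: hs)
  qed
qed

lemma eq_imp_sound:
  assumes n: "Nw_model M" and h: "is_hom M h" and e: "h a = h b"
  shows "perp M (El (h (fimp a b))) FF"
proof -
  have wk: "weak_N_alg M" using n by (simp add: Nw_model_def)
  have c: "\<And>p. h p \<in> car M" using hom_car[OF wk h] .
  have "perp M (El (h b)) (El (stm M (h b)))" using cond(1)[OF n c c c] .
  then have "perp M (El (mimp M (h a) (h b))) FF" using impF[OF n c c] e by simp
  then show ?thesis using hom_simps(4)[OF h] by simp
qed

lemma asax_sound:
  assumes nw: "N_alg M" and h: "is_hom M h" and ax: "AsAx f" and n: "Nw_model M"
  shows "perp M (El (h f)) FF"
proof -
  have wk: "weak_N_alg M" using n by (simp add: Nw_model_def)
  have c: "\<And>p. h p \<in> car M" using hom_car[OF wk h] .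
  have as: "h (Ot (Ot p q) r) = h (Ot p (Ot q r))" for p q r
    using nw c by (simp add: hom_simps[OF h] N_alg_def)
  show ?thesis using ax
  proof cases
    case (as1 p q r)
    then show ?thesis using eq_imp_sound[OF n h as] by simp
  next
    case (as2 p q r)
    then show ?thesis using eq_imp_sound[OF n h as[symmetric]] by simp
  qed
qed

lemma s_mp: "Nw_model M \<Longrightarrow> is_hom M h \<Longrightarrow> perp M (El (h (fimp p q))) FF \<Longrightarrow> perp M (El (h p)) FF
   \<Longrightarrow> perp M (El (h q)) FF"
proof -
  assume n: "Nw_model M" and hh: "is_hom M h" and a: "perp M (El (h (fimp p q))) FF" "perp M (El (h p)) FF"
  have c: "\<And>p. h p \<in> car M" using hom_car[OF _ hh] n by (simp add: Nw_model_def)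
  have "perp M (El (mimp M (h p) (h q))) FF" using a(1) hom_simps(4)[OF hh] by simp
  then have "perp M (El (h p)) (El (stm M (h q)))" using impF[OF n c c] by blast
  then have "perp M (El (stm M (h q))) TT" using cond(7)[OF n c c c, of p "St q"] a(2)
    hom_simps(3)[OF hh] by simp
  then have "perp M (El (stm M (stm M (h q)))) FF" using cond(4)[OF n c c c, of "St q"]
    hom_simps(3)[OF hh] by simp
  then show "perp M (El (h q)) FF" using alg(3)[OF n c] by simp
qed

lemma s_adj: "Nw_model M \<Longrightarrow> is_hom M h \<Longrightarrow> perp M (El (h p)) FF \<Longrightarrow> perp M (El (h q)) FF
   \<Longrightarrow> perp M (El (h (Ot p q))) FF"
proof -
  assume n: "Nw_model M" and hh: "is_hom M h" and a: "perp M (El (h p)) FF" "perp M (El (h q)) FF"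
  have c: "\<And>p. h p \<in> car M" using hom_car[OF _ hh] n by (simp add: Nw_model_def)
  have "perp M (El (otm M (h p) (h q))) FF" using cond(5)[OF n c c c, of p q] a by blast
  then show ?thesis using hom_simps(1)[OF hh] by simp
qed

lemma s_simpl: "Nw_model M \<Longrightarrow> is_hom M h \<Longrightarrow> perp M (El (h (Ot p q))) FF \<Longrightarrow> perp M (El (h p)) FF"
proof -
  assume n: "Nw_model M" and hh: "is_hom M h" and a: "perp M (El (h (Ot p q))) FF"
  have c: "\<And>p. h p \<in> car M" using hom_car[OF _ hh] n by (simp add: Nw_model_def)
  have "perp M (El (otm M (h p) (h q))) FF" using a hom_simps(1)[OF hh] by simp
  then show ?thesis using cond(5)[OF n c c c, of p q] by blast
qed

lemma s_rep: "Nw_model M \<Longrightarrow> is_hom M h \<Longrightarrow> perp M (El (h (fiff p q))) FF \<Longrightarrow> perp M (El (h c)) FF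
   \<Longrightarrow> repl p q True c c' \<Longrightarrow> perp M (El (h c')) FF"
proof -
  assume n: "Nw_model M" and hh: "is_hom M h" and a: "perp M (El (h (fiff p q))) FF" "perp M (El (h c)) FF"
    and r: "repl p q True c c'"
  have cc: "\<And>p. h p \<in> car M" using hom_car[OF _ hh] n by (simp add: Nw_model_def)
  have "perp M (El (miff M (h p) (h q))) FF" using a(1) hom_simps(5)[OF hh] by simp
  then have "h p = h q" using iffF[OF n cc cc] by blast
  then have "h c = h c'" using repl_hom r hh by blast
  then show ?thesis using a(2) by simp
qed

lemma s_DI: "Nwd M \<Longrightarrow> is_hom M h \<Longrightarrow> perp M (El (h p)) FF \<Longrightarrow> perp M (El (h (foplus p q))) FF"
proof -
  assume n: "Nwd M" and hh: "is_hom M h" and a: "perp M (El (h p)) FF"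
  have c: "\<And>p. h p \<in> car M" using hom_car[OF _ hh] n by (simp add: Nwd_def Nw_model_def)
  have "perp M (El (moplus M (h p) (h q))) FF" using n c a unfolding Nwd_def by blast
  then show ?thesis using hom_simps(8)[OF hh] by simp
qed

definition sem :: "bool \<Rightarrow> fm set \<Rightarrow> fm \<Rightarrow> 'a itself \<Rightarrow> bool" where
  "sem as G f (T :: 'a itself) \<longleftrightarrow> (\<forall>(M :: 'a nmodel) h. Nwd M \<longrightarrow> (as \<longrightarrow> N_alg M) \<longrightarrow> is_hom M h \<longrightarrow>
      h ` G \<subseteq> Fperp M \<longrightarrow> perp M (El (h f)) FF)"

lemma semD: "sem as G f TYPE('a) \<Longrightarrow> Nwd (M :: 'a nmodel) \<Longrightarrow> (as \<longrightarrow> N_alg M) \<Longrightarrow> is_hom M h \<Longrightarrow>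
   h ` G' \<subseteq> Fperp M \<Longrightarrow> G \<subseteq> G' \<Longrightarrow> perp M (El (h f)) FF"
  unfolding sem_def by blast

lemma NeL_sound:
  "NeL_DI as \<Gamma> f \<Longrightarrow> \<exists>G. finite G \<and> G \<subseteq> \<Gamma> \<and> sem as G f TYPE('a)"
proof (induction rule: NeL_DI.induct)
  case (hyp p)
  have "sem as {p} p TYPE('a)" unfolding sem_def by (auto simp: Fperp_def)
  then show ?case using hyp by blast
next
  case (ax p)
  have "sem as {} p TYPE('a)" unfolding sem_def using ax by (auto simp: Nwd_def intro: ax_sound)
  then show ?case by blast
next
  case (axas p)
  have "sem as {} p TYPE('a)" unfolding sem_def using axas by (auto simp: Nwd_def intro: asax_sound)
  then show ?case by blast
next
  case (mp p q)
  obtain G1 where 1: "finite G1" "G1 \<subseteq> \<Gamma>" "sem as G1 (fimp p q) TYPE('a)" using mp.IH(1) by blast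
  obtain G2 where 2: "finite G2" "G2 \<subseteq> \<Gamma>" "sem as G2 p TYPE('a)" using mp.IH(2) by blast
  have "sem as (G1 \<union> G2) q TYPE('a)" unfolding sem_def
  proof (intro allI impI)
    fix M :: "'a nmodel" and h
    assume K: "Nwd M" "as \<longrightarrow> N_alg M" and hh: "is_hom M h" and F: "h ` (G1 \<union> G2) \<subseteq> Fperp M"
    have n: "Nw_model M" using K by (simp add: Nwd_def)
    show "perp M (El (h q)) FF"
      by (rule s_mp[OF n hh semD[OF 1(3) K hh F] semD[OF 2(3) K hh F]]) auto
  qed
  then show ?case using 1 2 by (intro exI[of _ "G1 \<union> G2"]) simp
next
  case (adj p q)
  obtain G1 where 1: "finite G1" "G1 \<subseteq> \<Gamma>" "sem as G1 p TYPE('a)" using adj.IH(1) by blast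
  obtain G2 where 2: "finite G2" "G2 \<subseteq> \<Gamma>" "sem as G2 q TYPE('a)" using adj.IH(2) by blast
  have "sem as (G1 \<union> G2) (Ot p q) TYPE('a)" unfolding sem_def
  proof (intro allI impI)
    fix M :: "'a nmodel" and h
    assume K: "Nwd M" "as \<longrightarrow> N_alg M" and hh: "is_hom M h" and F: "h ` (G1 \<union> G2) \<subseteq> Fperp M"
    have n: "Nw_model M" using K by (simp add: Nwd_def)
    show "perp M (El (h (Ot p q))) FF"
      by (rule s_adj[OF n hh semD[OF 1(3) K hh F] semD[OF 2(3) K hh F]]) auto
  qed
  then show ?case using 1 2 by (intro exI[of _ "G1 \<union> G2"]) simp
next
  case (rep p q c c')
  obtain G1 where 1: "finite G1" "G1 \<subseteq> \<Gamma>" "sem as G1 (fiff p q) TYPE('a)" using rep.IH(1) by blast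
  obtain G2 where 2: "finite G2" "G2 \<subseteq> \<Gamma>" "sem as G2 c TYPE('a)" using rep.IH(2) by blast
  have "sem as (G1 \<union> G2) c' TYPE('a)" unfolding sem_def
  proof (intro allI impI)
    fix M :: "'a nmodel" and h
    assume K: "Nwd M" "as \<longrightarrow> N_alg M" and hh: "is_hom M h" and F: "h ` (G1 \<union> G2) \<subseteq> Fperp M"
    have n: "Nw_model M" using K by (simp add: Nwd_def)
    show "perp M (El (h c')) FF"
      by (rule s_rep[OF n hh semD[OF 1(3) K hh F] semD[OF 2(3) K hh F] rep.hyps(3)]) auto
  qed
  then show ?case using 1 2 by (intro exI[of _ "G1 \<union> G2"]) simp
next
  case (simpl p q)
  obtain G1 where 1: "finite G1" "G1 \<subseteq> \<Gamma>" "sem as G1 (Ot p q) TYPE('a)" using simpl.IH(1) by blast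
  have "sem as G1 p TYPE('a)" unfolding sem_def
  proof (intro allI impI)
    fix M :: "'a nmodel" and h
    assume K: "Nwd M" "as \<longrightarrow> N_alg M" and hh: "is_hom M h" and F: "h ` G1 \<subseteq> Fperp M"
    have n: "Nw_model M" using K by (simp add: Nwd_def)
    show "perp M (El (h p)) FF"
      by (rule s_simpl[OF n hh semD[OF 1(3) K hh F]]) auto
  qed
  then show ?case using 1 by blast
next
  case (DIs p q)
  obtain G1 where 1: "finite G1" "G1 \<subseteq> \<Gamma>" "sem as G1 p TYPE('a)" using DIs.IH(1) by blast
  have "sem as G1 (foplus p q) TYPE('a)" unfolding sem_def
  proof (intro allI impI)
    fix M :: "'a nmodel" and h
    assume K: "Nwd M" "as \<longrightarrow> N_alg M" and hh: "is_hom M h" and F: "h ` G1 \<subseteq> Fperp M"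
    show "perp M (El (h (foplus p q))) FF"
      by (rule s_DI[OF K(1) hh semD[OF 1(3) K hh F]]) auto
  qed
  then show ?case using 1 by blast
qed



context fixes as :: bool and \<Gamma> :: "fm set" begin

definition eqv where "eqv p q \<longleftrightarrow> NeL_DI as \<Gamma> (fiff p q)"

lemma eqv_refl: "eqv p p"
  unfolding eqv_def fiff_def by (intro NeL_DI.adj NeL_DI.ax Ax.A1)

lemma D_rep: "eqv p q \<Longrightarrow> NeL_DI as \<Gamma> p \<Longrightarrow> NeL_DI as \<Gamma> q"
  unfolding eqv_def using NeL_DI.rep repl.here by blast

lemma repl_False: "repl p q b c c' \<Longrightarrow> \<not> b \<Longrightarrow> c' = c"
  by (induction rule: repl.induct) auto

lemma repl_iff: "repl p q b c c' \<Longrightarrow> repl p q b (fiff c c) (fiff c c')"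
proof -
  assume r: "repl p q b c c'"
  have "repl p q ((False \<or> b) \<or> (b \<or> False)) (fiff c c) (fiff c c')"
    unfolding fiff_def fimp_def
    by (rule repl.ot[OF repl.st[OF repl.ci[OF repl.keep repl.st[OF r]]] repl.st[OF repl.ci[OF r repl.st[OF repl.keep]]]])
  then show ?thesis by simp
qed

lemma cong_repl: "eqv p q \<Longrightarrow> repl p q b c c' \<Longrightarrow> eqv c c'"
proof (cases b)
  case True
  assume "eqv p q" "repl p q b c c'"
  then have "repl p q True (fiff c c) (fiff c c')" using True repl_iff by simp
  then show ?thesis using \<open>eqv p q\<close> eqv_refl NeL_DI.rep unfolding eqv_def by blast
next
  case False
  assume "repl p q b c c'"
  then show ?thesis using False repl_False eqv_refl by blast
qed

lemma eqv_sym: "eqv p q \<Longrightarrow> eqv q p"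
proof -
  assume e: "eqv p q"
  have "repl p q ((True \<or> False) \<or> (False \<or> True)) (fiff p p) (fiff q p)"
    unfolding fiff_def fimp_def
    by (rule repl.ot[OF repl.st[OF repl.ci[OF repl.here repl.st[OF repl.keep]]] repl.st[OF repl.ci[OF repl.keep repl.st[OF repl.here]]]])
  then have "repl p q True (fiff p p) (fiff q p)" by simp
  then show ?thesis using e eqv_refl unfolding eqv_def by (blast intro: NeL_DI.rep)
qed

lemma eqv_trans: "eqv p q \<Longrightarrow> eqv q r \<Longrightarrow> eqv p r"
proof -
  assume e: "eqv p q" "eqv q r"
  have "repl q r ((False \<or> True) \<or> (True \<or> False)) (fiff p q) (fiff p r)"
    unfolding fiff_def fimp_def
    by (rule repl.ot[OF repl.st[OF repl.ci[OF repl.keep repl.st[OF repl.here]]] repl.st[OF repl.ci[OF repl.here repl.st[OF repl.keep]]]])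
  then have "repl q r True (fiff p q) (fiff p r)" by simp
  then show ?thesis using e unfolding eqv_def by (blast intro: NeL_DI.rep)
qed

lemma cong_St: "eqv a a' \<Longrightarrow> eqv (St a) (St a')"
  by (rule cong_repl[OF _ repl.st[OF repl.here]])

lemma cong_Ot: "eqv a a' \<Longrightarrow> eqv b b' \<Longrightarrow> eqv (Ot a b) (Ot a' b')"
proof -
  assume e: "eqv a a'" "eqv b b'"
  have 1: "eqv (Ot a b) (Ot a' b)"
    by (rule cong_repl[OF e(1) repl.ot[OF repl.here repl.keep]])
  have 2: "eqv (Ot a' b) (Ot a' b')"
    by (rule cong_repl[OF e(2) repl.ot[OF repl.keep repl.here]])
  show ?thesis by (rule eqv_trans[OF 1 2])
qed

lemma cong_Ci: "eqv a a' \<Longrightarrow> eqv b b' \<Longrightarrow> eqv (Ci a b) (Ci a' b')"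
proof -
  assume e: "eqv a a'" "eqv b b'"
  have 1: "eqv (Ci a b) (Ci a' b)"
    by (rule cong_repl[OF e(1) repl.ci[OF repl.here repl.keep]])
  have 2: "eqv (Ci a' b) (Ci a' b')"
    by (rule cong_repl[OF e(2) repl.ci[OF repl.keep repl.here]])
  show ?thesis by (rule eqv_trans[OF 1 2])
qed

lemma D_eqv: "eqv a b \<Longrightarrow> NeL_DI as \<Gamma> b \<Longrightarrow> NeL_DI as \<Gamma> a"
  by (rule D_rep[OF eqv_sym])

lemma comm_Ci: "eqv (Ci a b) (Ci b a)"
  unfolding eqv_def fiff_def by (intro NeL_DI.adj NeL_DI.ax Ax.A2)

lemma comm_Ot: "eqv (Ot a b) (Ot b a)"
  unfolding eqv_def by (intro NeL_DI.ax Ax.A5)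

lemma dneg: "eqv (St (St a)) a"
proof -
  have "NeL_DI as \<Gamma> (fimp (St a) (St a))" by (intro NeL_DI.ax Ax.A1)
  then have "NeL_DI as \<Gamma> (fimp (St (St a)) a)" unfolding fimp_def
    by (rule D_eqv[rotated]) (intro cong_St comm_Ci)
  moreover have "NeL_DI as \<Gamma> (fimp a (St (St a)))" by (intro NeL_DI.ax Ax.A3)
  ultimately show ?thesis unfolding eqv_def fiff_def by (intro NeL_DI.adj)
qed

lemma mp': "NeL_DI as \<Gamma> (fimp p q) \<Longrightarrow> NeL_DI as \<Gamma> p \<Longrightarrow> NeL_DI as \<Gamma> q"
  by (rule NeL_DI.mp)

lemma law1: "NeL_DI as \<Gamma> (fimp (St (Ci (Ot x y) z)) (St (Ci (Ot x z) y)))"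
proof -
  have a: "NeL_DI as \<Gamma> (fimp (fimp (Ot x y) (St z)) (fimp (Ot x (St (St z))) (St y)))"
    by (intro NeL_DI.ax Ax.A6)
  show ?thesis
    by (rule D_eqv[OF _ a]) (unfold fimp_def,
        intro cong_St cong_Ci cong_Ot eqv_refl dneg[THEN eqv_sym])
qed

lemma law: "eqv (Ci (Ot x y) z) (Ci (Ot x z) y)"
proof -
  have "eqv (St (Ci (Ot x y) z)) (St (Ci (Ot x z) y))"
    unfolding eqv_def fiff_def by (intro NeL_DI.adj law1)
  then have "eqv (St (St (Ci (Ot x y) z))) (St (St (Ci (Ot x z) y)))" by (rule cong_St)
  then show ?thesis using eqv_trans[OF eqv_trans[OF eqv_sym[OF dneg]] dneg] by blast
qed

definition rp where "rp p = (SOME q. eqv p q)"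

lemma rp_eqv: "eqv p (rp p)"
  unfolding rp_def by (rule someI[of _ p]) (rule eqv_refl)

lemma rp_eq: "eqv p q \<Longrightarrow> rp p = rp q"
proof -
  assume e: "eqv p q"
  have "(\<lambda>r. eqv p r) = (\<lambda>r. eqv q r)"
  proof (rule ext, rule iffI)
    fix r assume "eqv p r" then show "eqv q r" by (rule eqv_trans[OF eqv_sym[OF e]])
  next
    fix r assume "eqv q r" then show "eqv p r" by (rule eqv_trans[OF e])
  qed
  then show ?thesis unfolding rp_def by simp
qed

lemma rpI1: "eqv x p \<Longrightarrow> eqv (rp x) p" by (rule eqv_trans[OF eqv_sym[OF rp_eqv]])
lemma rpI2: "eqv p x \<Longrightarrow> eqv p (rp x)" by (rule eqv_trans[OF _ rp_eqv])

lemma eqv_via: "eqv A A' \<Longrightarrow> eqv A' B' \<Longrightarrow> eqv B B' \<Longrightarrow> eqv A B"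
  by (rule eqv_trans[OF eqv_trans eqv_sym])

lemmas ER = rpI1 rpI2 cong_St cong_Ot cong_Ci eqv_refl

definition cperp :: "(fm \<Rightarrow> 'a) \<Rightarrow> 'a ext \<Rightarrow> 'a ext \<Rightarrow> bool" where
  "cperp e u v = (case (u, v) of
      (El x, El y) \<Rightarrow> NeL_DI as \<Gamma> (St (Ci (inv e x) (inv e y)))
    | (El x, TT) \<Rightarrow> NeL_DI as \<Gamma> (St (inv e x))
    | (El x, FF) \<Rightarrow> NeL_DI as \<Gamma> (inv e x)
    | _ \<Rightarrow> False)"

definition cm :: "(fm \<Rightarrow> 'a) \<Rightarrow> 'a nmodel" where
  "cm e = \<lparr>car = range (\<lambda>p. e (rp p)),
           otm = \<lambda>x y. e (rp (Ot (inv e x) (inv e y))),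
           cim = \<lambda>x y. e (rp (Ci (inv e x) (inv e y))),
           stm = \<lambda>x. e (rp (St (inv e x))),
           perp = cperp e\<rparr>"

end

lemma ball_range: "(\<forall>x\<in>range f. P x) \<longleftrightarrow> (\<forall>p. P (f p))" by auto

context fixes as :: bool and \<Gamma> :: "fm set" and e :: "fm \<Rightarrow> 'a" assumes inj: "inj e"
begin

lemma ie[simp]: "inv e (e x) = x" using inj by simp

abbreviation "R p \<equiv> e (rp as \<Gamma> p)"
abbreviation "D p \<equiv> NeL_DI as \<Gamma> p"
abbreviation "M \<equiv> cm as \<Gamma> e"

lemma cm_simps:
  "car M = range (\<lambda>p. R p)"
  "otm M (R p) (R q) = R (Ot (rp as \<Gamma> p) (rp as \<Gamma> q))"
  "cim M (R p) (R q) = R (Ci (rp as \<Gamma> p) (rp as \<Gamma> q))"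
  "stm M (R p) = R (St (rp as \<Gamma> p))"
  "perp M (El (R p)) (El (R q)) = D (St (Ci (rp as \<Gamma> p) (rp as \<Gamma> q)))"
  "perp M (El (R p)) TT = D (St (rp as \<Gamma> p))"
  "perp M (El (R p)) FF = D (rp as \<Gamma> p)"
  by (simp_all add: cm_def cperp_def)

lemma Req: "eqv as \<Gamma> A B \<Longrightarrow> R A = R B" using rp_eq by metis

lemma D_rp: "D (rp as \<Gamma> p) \<longleftrightarrow> D p"
  using D_rep[OF eqv_sym[OF rp_eqv]] D_rep[OF rp_eqv] by blast


lemma cm_wk: "weak_N_alg M"
  unfolding weak_N_alg_def
proof (simp only: cm_simps(1) ball_range, intro conjI allI)
  fix p q r
  show "otm M (R p) (R q) \<in> range (\<lambda>p. R p)" "cim M (R p) (R q) \<in> range (\<lambda>p. R p)"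
    "stm M (R p) \<in> range (\<lambda>p. R p)" by (simp_all add: cm_simps)
  show "otm M (R p) (R q) = otm M (R q) (R p)" unfolding cm_simps by (rule Req, rule comm_Ot)
  show "cim M (R p) (R q) = cim M (R q) (R p)" unfolding cm_simps by (rule Req, rule comm_Ci)
  show "stm M (stm M (R p)) = R p" unfolding cm_simps
    by (rule Req, rule eqv_via[OF _ dneg[of as \<Gamma> p]]) (intro ER)+
  show "cim M (otm M (R p) (R q)) (R r) = cim M (otm M (R p) (R r)) (R q)" unfolding cm_simps
    by (rule Req, rule eqv_via[OF _ law[of as \<Gamma> p q r]]) (intro ER)+
qed

lemma cm_nw: "Nw_model M"
  unfolding Nw_model_def
proof (simp only: cm_wk cm_simps(1) ball_range, intro conjI allI TrueI)
  fix p q r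
  let ?r = "rp as \<Gamma>"
  show "perp M (El (R p)) (El (stm M (R p)))" unfolding cm_simps
    by (rule D_eqv[OF _ NeL_DI.ax[OF Ax.A1[of p]]], unfold fimp_def) (intro ER)+
  show "perp M (El (R p)) (El (stm M (R q))) \<and> perp M (El (R q)) (El (stm M (R p))) \<longrightarrow> R p = R q"
  proof
    assume a: "perp M (El (R p)) (El (stm M (R q))) \<and> perp M (El (R q)) (El (stm M (R p)))"
    have a1: "D (St (Ci (?r p) (?r (St (?r q)))))" "D (St (Ci (?r q) (?r (St (?r p)))))"
      using a unfolding cm_simps by blast+
    have "D (fimp p q)" by (rule D_eqv[OF _ a1(1)], unfold fimp_def) (intro ER)+
    moreover have "D (fimp q p)" by (rule D_eqv[OF _ a1(2)], unfold fimp_def) (intro ER)+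
    ultimately have "eqv as \<Gamma> p q" unfolding eqv_def fiff_def by (rule NeL_DI.adj)
    then show "R p = R q" by (rule Req)
  qed
  show "perp M (El (R p)) (El (R q)) = perp M (El (cim M (R p) (R q))) TT" unfolding cm_simps
    by (intro iffI; erule D_eqv[rotated]) (intro ER)+
  show "perp M (El (R p)) TT = perp M (El (stm M (R p))) FF" unfolding cm_simps
    by (intro iffI; erule D_eqv[rotated]) (intro ER)+
  show "(perp M (El (R p)) FF \<and> perp M (El (R q)) FF) = perp M (El (otm M (R p) (R q))) FF"
    unfolding cm_simps D_rp
  proof
    assume "D p \<and> D q" then show "D (Ot (?r p) (?r q))"
      by (intro NeL_DI.adj) (simp_all add: D_rp)
  next
    assume a: "D (Ot (?r p) (?r q))"
    then have "D (?r p)" by (rule NeL_DI.simpl)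
    moreover have "D (Ot (?r q) (?r p))" by (rule D_eqv[OF comm_Ot a])
    then have "D (?r q)" by (rule NeL_DI.simpl)
    ultimately show "D p \<and> D q" by (simp add: D_rp)
  qed
  show "perp M (El (stm M (cim M (R p) (stm M (R q))))) (El (stm M (cim M (R p) (R q))))"
    unfolding cm_simps
    by (rule D_eqv[OF _ NeL_DI.ax[OF Ax.A4[of p q]]], unfold fimp_def) (intro ER)+
  show "perp M (El (R p)) (El (R q)) \<and> perp M (El (R p)) FF \<longrightarrow> perp M (El (R q)) TT"
    unfolding cm_simps
  proof
    assume a: "D (St (Ci (?r p) (?r q))) \<and> D (?r p)"
    have "D (fimp (?r p) (St (?r q)))" unfolding fimp_def
      by (rule D_eqv[of _ _ _ "St (Ci (?r p) (?r q))"]) (intro cong_St cong_Ci eqv_refl dneg, use a in simp)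
    then show "D (St (?r q))" using a by (blast intro: NeL_DI.mp)
  qed
  show "perp M (El (mniff3 M (R p) (R q) (R r)))
     (El (stm M (mimp M (mimp M (R p) (R q)) (mimp M (mimp M (R q) (R r)) (mimp M (R p) (R r))))))"
    unfolding mniff3_def mniff_def miff_def mimp_def cm_simps
    by (rule D_eqv[OF _ NeL_DI.ax[OF Ax.A7[of p q r]]], unfold fimp_def fniff3_def fniff_def fiff_def) (intro ER)+
qed

lemma cm_nwd: "Nwd M"
  unfolding Nwd_def
proof (simp only: cm_nw cm_simps(1) ball_range, intro conjI allI impI TrueI)
  fix p q
  let ?r = "rp as \<Gamma>"
  assume "perp M (El (R p)) FF"
  then have "D (foplus (?r p) q)" unfolding cm_simps by (rule NeL_DI.DIs)
  then show "perp M (El (moplus M (R p) (R q))) FF"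
    unfolding moplus_def cm_simps
    by (rule D_eqv[rotated], unfold foplus_def) (intro ER)+
qed

lemma cm_nd:
  assumes as
  shows "Nd M"
proof -
  have "otm M (otm M (R p) (R q)) (R r) = otm M (R p) (otm M (R q) (R r))" for p q r
  proof -
    have "eqv as \<Gamma> (Ot (Ot p q) r) (Ot p (Ot q r))" unfolding eqv_def fiff_def
      using \<open>as\<close> by (intro NeL_DI.adj NeL_DI.axas AsAx.intros)
    then show ?thesis
      unfolding cm_simps by (rule Req[OF eqv_via[rotated]]) (intro ER)+
  qed
  then show ?thesis unfolding Nd_def N_alg_def cm_simps(1) ball_range using cm_nwd cm_wk by blast
qed
end


instance fm :: countable by countable_datatype

lemma cm_hom:
  assumes inj: "inj e"
  shows "is_hom (cm as \<Gamma> e) (\<lambda>p. e (rp as \<Gamma> p))"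
  unfolding is_hom_def
proof (intro conjI allI)
  fix n a b
  show "e (rp as \<Gamma> (Var n)) \<in> car (cm as \<Gamma> e)" by (simp add: cm_simps[OF inj])
  show "e (rp as \<Gamma> (Ot a b)) = otm (cm as \<Gamma> e) (e (rp as \<Gamma> a)) (e (rp as \<Gamma> b))"
    unfolding cm_simps[OF inj] by (rule Req[OF inj]) (intro ER)+
  show "e (rp as \<Gamma> (Ci a b)) = cim (cm as \<Gamma> e) (e (rp as \<Gamma> a)) (e (rp as \<Gamma> b))"
    unfolding cm_simps[OF inj] by (rule Req[OF inj]) (intro ER)+
  show "e (rp as \<Gamma> (St a)) = stm (cm as \<Gamma> e) (e (rp as \<Gamma> a))"
    unfolding cm_simps[OF inj] by (rule Req[OF inj]) (intro ER)+
qed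

lemma complete:
  assumes inj: "inj (e :: fm \<Rightarrow> 'a)" and c: "conseq K \<Gamma> f" and K: "K (cm as \<Gamma> e)"
  shows "NeL_DI as \<Gamma> f"
proof -
  from c obtain G where G: "G \<subseteq> \<Gamma>" and
    H: "\<forall>M h. K M \<longrightarrow> is_hom M h \<longrightarrow> h ` G \<subseteq> Fperp M \<longrightarrow> h f \<in> Fperp M"
    unfolding conseq_def by blast
  have "(\<lambda>p. e (rp as \<Gamma> p)) ` G \<subseteq> Fperp (cm as \<Gamma> e)"
  proof
    fix x assume "x \<in> (\<lambda>p. e (rp as \<Gamma> p)) ` G"
    then obtain p where p: "p \<in> G" "x = e (rp as \<Gamma> p)" by blast
    have "NeL_DI as \<Gamma> p" using p G by (blast intro: NeL_DI.hyp)
    then show "x \<in> Fperp (cm as \<Gamma> e)" using p by (simp add: Fperp_def cm_simps[OF inj] D_rp[OF inj])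
  qed
  then have "e (rp as \<Gamma> f) \<in> Fperp (cm as \<Gamma> e)" using H K cm_hom[OF inj] by blast
  then show ?thesis by (simp add: Fperp_def cm_simps[OF inj] D_rp[OF inj])
qed

lemma sound:
  assumes "NeL_DI as \<Gamma> f" and KK: "\<And>M. K M \<Longrightarrow> Nwd M \<and> (as \<longrightarrow> N_alg M)"
  shows "conseq (K :: 'a nmodel \<Rightarrow> bool) \<Gamma> f"
proof -
  obtain G where G: "finite G" "G \<subseteq> \<Gamma>" and H: "sem as G f TYPE('a)"
    using NeL_sound[OF assms(1)] by blast
  show ?thesis unfolding conseq_def
  proof (intro exI[of _ G] conjI G allI impI)
    fix M :: "'a nmodel" and h assume "K M" "is_hom M h" "h ` G \<subseteq> Fperp M"
    moreover have "h f \<in> car M" using KK[OF \<open>K M\<close>] hom_car[OF _ \<open>is_hom M h\<close>]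
      by (simp add: Nwd_def Nw_model_def)
    moreover have "perp M (El (h f)) FF"
      using semD[OF H _ _ \<open>is_hom M h\<close> \<open>h ` G \<subseteq> Fperp M\<close>] KK[OF \<open>K M\<close>] by blast
    ultimately show "h f \<in> Fperp M" by (simp add: Fperp_def)
  qed
qed

lemma thm_eq1: "NL_DI_thm as f \<Longrightarrow> NeL_DI as {} f"
  by (induction rule: NL_DI_thm.induct) (auto intro: NeL_DI.intros)

lemma thm_eq2: "NeL_DI as G f \<Longrightarrow> G = {} \<Longrightarrow> NL_DI_thm as f"
  by (induction rule: NeL_DI.induct) (auto intro: NL_DI_thm.intros)

lemma valid_conseq:
  assumes KK: "\<And>M. K M \<Longrightarrow> Nwd M"
  shows "valid K f \<longleftrightarrow> conseq K {} f"
proof -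
  have "h f \<in> car M" if "K M" "is_hom M h" for M h
    using KK[OF that(1)] hom_car[OF _ that(2)] by (simp add: Nwd_def Nw_model_def)
  then show ?thesis unfolding valid_def conseq_def Fperp_def by auto
qed

theorem theorem5p11:
  assumes "infinite (UNIV :: 'a set)"
  shows "(NeL_DI False \<Gamma> \<phi> \<longleftrightarrow> conseq (Nwd :: 'a nmodel \<Rightarrow> bool) \<Gamma> \<phi>) \<and>
         (NeL_DI True \<Gamma> \<phi> \<longleftrightarrow> conseq (Nd :: 'a nmodel \<Rightarrow> bool) \<Gamma> \<phi>) \<and>
         (NL_DI_thm False \<phi> \<longleftrightarrow> valid (Nwd :: 'a nmodel \<Rightarrow> bool) \<phi>) \<and>
         (NL_DI_thm True \<phi> \<longleftrightarrow> valid (Nd :: 'a nmodel \<Rightarrow> bool) \<phi>)"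
proof -
  obtain g :: "nat \<Rightarrow> 'a" where g: "inj g" using infinite_countable_subset[OF assms] by blast
  define e :: "fm \<Rightarrow> 'a" where "e = g \<circ> to_nat"
  have inj: "inj e" unfolding e_def using g by (simp add: inj_compose)
  have nd_nwd: "\<And>M. Nd M \<Longrightarrow> Nwd M" by (simp add: Nd_def)
  have A: "NeL_DI False G f \<longleftrightarrow> conseq (Nwd :: 'a nmodel \<Rightarrow> bool) G f" for G f
    using sound[of False G f Nwd] complete[OF inj, of Nwd G f False] cm_nwd[OF inj] by blast
  have B: "NeL_DI True G f \<longleftrightarrow> conseq (Nd :: 'a nmodel \<Rightarrow> bool) G f" for G f
    using sound[of True G f Nd] complete[OF inj, of Nd G f True] cm_nd[OF inj] by (auto simp: Nd_def)
  have T: "NL_DI_thm as f \<longleftrightarrow> NeL_DI as {} f" for as f using thm_eq1 thm_eq2 by blast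
  show ?thesis using A B T valid_conseq[of Nwd] valid_conseq[of Nd, OF nd_nwd] by blast
qed

end
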